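(* Let $G=(V,E)$ be $(2,2)$-$C_i$-tight and let $v\in V$ have degree 3 with $N(v)\cap N(v')=\emptyset$. Then either $G[N(v)\cup\{v\}]\cong K_4$, or there exist $x,y\in N(v)$ with $xy\notin E$ such that $G-\{v,v'\}+\{xy,x'y'\}$ is $(2,2)$-$C_i$-tight.
   Context: A $\mathbb{Z}_2$-symmetric graph is a finite simple graph $G=(V,E)$ with an automorphism $\theta$, $\theta^2=\mathrm{id}$; write $v'=\theta(v)$. A vertex is fixed if $v'=v$; an edge $uv$ is fixed if $\{u',v'\}=\{u,v\}$. $G$ is $(2,2)$-sparse if every subgraph $(V',E')$ with $V'\ne\emptyset$ has $|E'|\le2|V'|-2$, $(2,2)$-tight if also $|E|=2|V|-2$. $G$ is $(2,2)$-$C_i$-tight if it is $(2,2)$-tight and $\theta$ fixes no vertex and no edge. $N(v)$ is the set of neighbours of $v$; $G-\{v,v'\}+\{xy,x'y'\}$ denotes deleting $v,v'$ and adding edges $xy,x'y'$, with the restricted involution. *)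

theory Defs
  imports Main
begin

definition simple_graph :: "'a set \<Rightarrow> 'a set set \<Rightarrow> bool" where
  "simple_graph V E \<longleftrightarrow> finite V \<and>
     (\<forall>e\<in>E. \<exists>u v. u \<noteq> v \<and> u \<in> V \<and> v \<in> V \<and> e = {u, v})"

definition z2_symmetric :: "'a set \<Rightarrow> 'a set set \<Rightarrow> ('a \<Rightarrow> 'a) \<Rightarrow> bool" where
  "z2_symmetric V E \<theta> \<longleftrightarrow> simple_graph V E \<and>
     (\<forall>v\<in>V. \<theta> v \<in> V \<and> \<theta> (\<theta> v) = v) \<and>
     (\<forall>u\<in>V. \<forall>v\<in>V. {u, v} \<in> E \<longleftrightarrow> {\<theta> u, \<theta> v} \<in> E)"

definition sparse22 :: "'a set \<Rightarrow> 'a set set \<Rightarrow> bool" where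
  "sparse22 V E \<longleftrightarrow> (\<forall>V' E'. V' \<subseteq> V \<and> V' \<noteq> {} \<and> E' \<subseteq> E \<and> (\<forall>e\<in>E'. e \<subseteq> V')
       \<longrightarrow> int (card E') \<le> 2 * int (card V') - 2)"

definition tight22 :: "'a set \<Rightarrow> 'a set set \<Rightarrow> bool" where
  "tight22 V E \<longleftrightarrow> sparse22 V E \<and> int (card E) = 2 * int (card V) - 2"

definition Ci_tight22 :: "'a set \<Rightarrow> 'a set set \<Rightarrow> ('a \<Rightarrow> 'a) \<Rightarrow> bool" where
  "Ci_tight22 V E \<theta> \<longleftrightarrow> z2_symmetric V E \<theta> \<and> tight22 V E \<and>
     (\<forall>v\<in>V. \<theta> v \<noteq> v) \<and> (\<forall>e\<in>E. \<theta> ` e \<noteq> e)"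

definition nbhd :: "'a set \<Rightarrow> 'a set set \<Rightarrow> 'a \<Rightarrow> 'a set" where
  "nbhd V E v = {u \<in> V. {v, u} \<in> E}"

definition induced_K4 :: "'a set set \<Rightarrow> 'a set \<Rightarrow> bool" where
  "induced_K4 E S \<longleftrightarrow> card S = 4 \<and> (\<forall>a\<in>S. \<forall>b\<in>S. a \<noteq> b \<longrightarrow> {a, b} \<in> E)"

text \<open>G - {v,v'} + {xy, x'y'} (vertex set and edge set; involution is restricted).\<close>
definition red_V :: "'a set \<Rightarrow> ('a \<Rightarrow> 'a) \<Rightarrow> 'a \<Rightarrow> 'a set" where
  "red_V V \<theta> v = V - {v, \<theta> v}"

definition red_E :: "'a set set \<Rightarrow> ('a \<Rightarrow> 'a) \<Rightarrow> 'a \<Rightarrow> 'a \<Rightarrow> 'a \<Rightarrow> 'a set set" where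
  "red_E E \<theta> v x y = {e \<in> E. v \<notin> e \<and> \<theta> v \<notin> e} \<union> {{x, y}, {\<theta> x, \<theta> y}}"

end

theory Submission
  imports Defs
begin


definition iE :: "'a set set \<Rightarrow> 'a set \<Rightarrow> 'a set set" where
  "iE E X = {e \<in> E. e \<subseteq> X}"

lemma even_inv:
  assumes "finite A" "\<forall>a\<in>A. g a \<in> A \<and> g (g a) = a \<and> g a \<noteq> a"
  shows "even (card A)"
  using assms
proof (induction "card A" arbitrary: A rule: less_induct)
  case less
  show ?case
  proof (cases "A = {}")
    case True then show ?thesis by simp
  next
    case False
    then obtain a where a: "a \<in> A" by blast
    define B where "B = A - {a, g a}"
    have ga: "g a \<in> A" "g a \<noteq> a" using a less.prems by auto
    have sub: "{a, g a} \<subseteq> A" using a ga by auto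
    have cB: "card B = card A - 2" unfolding B_def
      using card_Diff_subset[OF _ sub] less.prems ga by simp
    have cA: "card A \<ge> 2" using card_mono[OF less.prems(1) sub] ga by simp
    have "\<forall>b\<in>B. g b \<in> B \<and> g (g b) = b \<and> g b \<noteq> b"
      unfolding B_def using less.prems a by (metis Diff_iff insertCI insertE singletonD)
    moreover have "finite B" using less.prems B_def by simp
    ultimately have eB: "even (card B)" using less.hyps[of B] cB cA by simp
    have "card A = card B + 2" using cB cA by simp
    then show ?thesis using eB by simp
  qed
qed

locale L5 =
  fixes V :: "'a set" and E :: "'a set set" and th :: "'a \<Rightarrow> 'a" and v :: 'a
  assumes ct: "Ci_tight22 V E th" and vV: "v \<in> V"
    and deg: "card (nbhd V E v) = 3"
    and disj: "nbhd V E v \<inter> nbhd V E (th v) = {}"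
begin

abbreviation ic :: "'a set \<Rightarrow> int" where "ic X \<equiv> int (card (iE E X))"
abbreviation N where "N \<equiv> nbhd V E v"

lemma finV: "finite V" using ct unfolding Ci_tight22_def z2_symmetric_def simple_graph_def by blast
lemma edgeE: "e \<in> E \<Longrightarrow> \<exists>a b. a \<noteq> b \<and> a \<in> V \<and> b \<in> V \<and> e = {a,b}"
  using ct unfolding Ci_tight22_def z2_symmetric_def simple_graph_def by blast
lemma E_sub: "e \<in> E \<Longrightarrow> e \<subseteq> V" using edgeE by blast
lemma finE: "finite E"
  by (meson E_sub PowI finV finite_Pow_iff finite_subset subsetI)
lemma finiE: "finite (iE E X)" unfolding iE_def using finE by simp
lemma thV: "u \<in> V \<Longrightarrow> th u \<in> V"
  using ct unfolding Ci_tight22_def z2_symmetric_def by blast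
lemma thth: "u \<in> V \<Longrightarrow> th (th u) = u"
  using ct unfolding Ci_tight22_def z2_symmetric_def by blast
lemma thE: "u \<in> V \<Longrightarrow> w \<in> V \<Longrightarrow> {th u, th w} \<in> E \<longleftrightarrow> {u,w} \<in> E"
  using ct unfolding Ci_tight22_def z2_symmetric_def by blast
lemma nofixv: "u \<in> V \<Longrightarrow> th u \<noteq> u"
  using ct unfolding Ci_tight22_def by blast
lemma nofixe: "e \<in> E \<Longrightarrow> th ` e \<noteq> e"
  using ct unfolding Ci_tight22_def by blast
lemma cardE: "int (card E) = 2 * int (card V) - 2"
  using ct unfolding Ci_tight22_def tight22_def by blast
lemma sparse:
  assumes "X \<subseteq> V" "X \<noteq> {}" shows "ic X \<le> 2 * int (card X) - 2"
proof -
  have "sparse22 V E" using ct unfolding Ci_tight22_def tight22_def by blast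
  then have "\<forall>E'. E' \<subseteq> E \<and> (\<forall>e\<in>E'. e \<subseteq> X) \<longrightarrow> int (card E') \<le> 2 * int (card X) - 2"
    using assms unfolding sparse22_def by blast
  then show ?thesis unfolding iE_def by (erule_tac x="{e \<in> E. e \<subseteq> X}" in allE) auto
qed

lemma th_inj: "a \<in> V \<Longrightarrow> b \<in> V \<Longrightarrow> th a = th b \<longleftrightarrow> a = b"
  by (metis thth)
lemma th_edge: assumes "e \<in> E" shows "th ` e \<in> E"
proof -
  obtain a b where ab: "a \<in> V" "b \<in> V" "e = {a,b}" using edgeE[OF assms] by blast
  then have "th ` e = {th a, th b}" by simp
  then show ?thesis using thE[OF ab(1,2)] assms ab(3) by simp
qed
lemma thth_img: "A \<subseteq> V \<Longrightarrow> th ` th ` A = A"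
proof -
  assume A: "A \<subseteq> V"
  have "th ` th ` A = (\<lambda>u. th (th u)) ` A" by (simp add: image_image)
  also have "\<dots> = (\<lambda>u. u) ` A" by (rule image_cong) (use A thth in auto)
  finally show ?thesis by simp
qed
lemma inj_th: "inj_on th V" by (metis inj_onI thth)
lemma card_th: "X \<subseteq> V \<Longrightarrow> card (th ` X) = card X"
  by (meson card_image inj_on_subset inj_th)
lemma th_sub: "X \<subseteq> V \<Longrightarrow> th ` X \<subseteq> V" using thV by blast

lemma ic_th: assumes "X \<subseteq> V" shows "ic (th ` X) = ic X"
proof -
  have eq: "iE E (th ` X) = (\<lambda>e. th ` e) ` iE E X"
  proof
    show "(\<lambda>e. th ` e) ` iE E X \<subseteq> iE E (th ` X)"
      unfolding iE_def using th_edge by auto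
    show "iE E (th ` X) \<subseteq> (\<lambda>e. th ` e) ` iE E X"
    proof
      fix f assume f: "f \<in> iE E (th ` X)"
      then have fE: "f \<in> E" "f \<subseteq> th ` X" unfolding iE_def by auto
      have "f = th ` th ` f" using thth_img E_sub fE by simp
      moreover have "th ` f \<in> iE E X" unfolding iE_def using th_edge[OF fE(1)]
          image_mono[OF fE(2), of th] thth_img[OF assms] by auto
      ultimately show "f \<in> (\<lambda>e. th ` e) ` iE E X" by blast
    qed
  qed
  have "inj_on (\<lambda>e. th ` e) (iE E X)"
    by (rule inj_onI) (metis (no_types, lifting) E_sub iE_def mem_Collect_eq thth_img)
  then show ?thesis using eq card_image by metis
qed

lemma ic_even: assumes "U \<subseteq> V" "th ` U = U" shows "even (card (iE E U))"
proof (rule even_inv[where g="\<lambda>e. th ` e"])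
  show "finite (iE E U)" by (rule finiE)
  show "\<forall>a\<in>iE E U. th ` a \<in> iE E U \<and> th ` th ` a = a \<and> th ` a \<noteq> a"
  proof
    fix a assume a: "a \<in> iE E U"
    then have aE: "a \<in> E" and aU: "a \<subseteq> U" unfolding iE_def by auto
    have "th ` a \<subseteq> th ` U" using aU by (rule image_mono)
    then have "th ` a \<in> iE E U" using th_edge[OF aE] assms(2) unfolding iE_def by simp
    moreover have "th ` th ` a = a" using thth_img E_sub[OF aE] by simp
    moreover have "th ` a \<noteq> a" using nofixe[OF aE] .
    ultimately show "th ` a \<in> iE E U \<and> th ` th ` a = a \<and> th ` a \<noteq> a" by blast
  qed
qed

lemma submod: "ic X + ic Y \<le> ic (X \<union> Y) + ic (X \<inter> Y)"
proof -
  have i: "iE E (X \<inter> Y) = iE E X \<inter> iE E Y" unfolding iE_def by auto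
  have u: "iE E X \<union> iE E Y \<subseteq> iE E (X \<union> Y)" unfolding iE_def by auto
  have "card (iE E X) + card (iE E Y) = card (iE E X \<union> iE E Y) + card (iE E (X \<inter> Y))"
    using card_Un_Int[OF finiE finiE] i by simp
  moreover have "card (iE E X \<union> iE E Y) \<le> card (iE E (X \<union> Y))" using card_mono[OF finiE u] .
  ultimately show ?thesis by linarith
qed

lemma addv:
  assumes "u \<notin> X" "S \<subseteq> X" "finite S" "\<forall>s\<in>S. {u,s} \<in> E"
  shows "ic X + int (card S) \<le> ic (insert u X)"
proof -
  have sub: "iE E X \<union> (\<lambda>s. {u,s}) ` S \<subseteq> iE E (insert u X)"
    unfolding iE_def using assms by auto
  have dis: "iE E X \<inter> (\<lambda>s. {u,s}) ` S = {}" unfolding iE_def using assms by auto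
  have inj: "inj_on (\<lambda>s. {u,s}) S" 
    by (rule inj_onI) (metis assms(1,2) doubleton_eq_iff subsetD)
  have "card (iE E X \<union> (\<lambda>s. {u,s}) ` S) = card (iE E X) + card S"
    using card_Un_disjoint[OF finiE _ dis] assms(3) card_image[OF inj] by simp
  then show ?thesis using card_mono[OF finiE sub] by linarith
qed

lemma tight_union:
  assumes "T1 \<subseteq> V" "T2 \<subseteq> V" "T1 \<inter> T2 \<noteq> {}"
    "2 * int (card T1) - 2 \<le> ic T1" "2 * int (card T2) - 2 \<le> ic T2"
  shows "2 * int (card (T1 \<union> T2)) - 2 \<le> ic (T1 \<union> T2)"
proof -
  have f: "finite T1" "finite T2" using assms finV finite_subset by auto
  have "card T1 + card T2 = card (T1 \<union> T2) + card (T1 \<inter> T2)" using card_Un_Int[OF f] .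
  moreover have "ic (T1 \<inter> T2) \<le> 2 * int (card (T1 \<inter> T2)) - 2" using sparse[of "T1 \<inter> T2"] assms(1,3) by auto
  moreover note submod[of T1 T2]
  ultimately show ?thesis using assms(4,5) by linarith
qed

end



context L5
begin

lemma N_sub: "N \<subseteq> V" unfolding nbhd_def by auto
lemma N_edge: "u \<in> N \<Longrightarrow> {v,u} \<in> E" unfolding nbhd_def by auto
lemma nb_ne: assumes "u \<in> nbhd V E w" shows "u \<noteq> w"
proof
  assume uw: "u = w"
  have "{w,u} \<in> E" using assms unfolding nbhd_def by simp
  then obtain a b where ab: "a \<noteq> b" "{w,u} = {a,b}" using edgeE by blast
  have "a \<in> {w,u}" "b \<in> {w,u}" using ab(2) by auto
  then show False using uw ab(1) by simp
qed
lemma v'V: "th v \<in> V" using thV vV .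
lemma v'ne: "th v \<noteq> v" using nofixv vV .
lemma v'notN: "th v \<notin> N"
proof
  assume "th v \<in> N"
  then have e: "{v, th v} \<in> E" by (rule N_edge)
  have "th ` {v, th v} = {v, th v}" using thth[OF vV] by auto
  then show False using nofixe[OF e] by simp
qed
lemma thN: "u \<in> N \<Longrightarrow> th u \<in> nbhd V E (th v)"
  unfolding nbhd_def using thE thV vV by auto
lemma thN_notN: "u \<in> N \<Longrightarrow> th u \<notin> N" using thN disj by blast
lemma N'_eq: "nbhd V E (th v) = th ` N"
proof
  show "th ` N \<subseteq> nbhd V E (th v)" using thN by blast
  show "nbhd V E (th v) \<subseteq> th ` N"
  proof
    fix u assume u: "u \<in> nbhd V E (th v)"
    then have uV: "u \<in> V" and e: "{th v, u} \<in> E" unfolding nbhd_def by auto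
    have "{th (th v), th u} \<in> E" using thE[OF v'V uV] e by simp
    then have "th u \<in> N" using thth[OF vV] thV[OF uV] unfolding nbhd_def by auto
    moreover have "u = th (th u)" using thth[OF uV] by simp
    ultimately show "u \<in> th ` N" by blast
  qed
qed
lemma card_N': "card (nbhd V E (th v)) = 3"
  using N'_eq card_th[OF N_sub] deg by simp

lemma star_eq: assumes "w \<in> V" shows "{e \<in> E. w \<in> e} = (\<lambda>u. {w,u}) ` nbhd V E w"
proof
  show "(\<lambda>u. {w,u}) ` nbhd V E w \<subseteq> {e \<in> E. w \<in> e}" unfolding nbhd_def by auto
  show "{e \<in> E. w \<in> e} \<subseteq> (\<lambda>u. {w,u}) ` nbhd V E w"
  proof
    fix e assume "e \<in> {e \<in> E. w \<in> e}"
    then have eE: "e \<in> E" and we: "w \<in> e" by auto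
    obtain a b where ab: "a \<noteq> b" "a \<in> V" "b \<in> V" "e = {a,b}" using edgeE[OF eE] by blast
    show "e \<in> (\<lambda>u. {w,u}) ` nbhd V E w"
    proof (cases "a = w")
      case True then show ?thesis using ab eE unfolding nbhd_def by auto
    next
      case False then have "b = w" using ab we by auto
      then show ?thesis using ab eE unfolding nbhd_def by (auto simp: insert_commute)
    qed
  qed
qed

lemma card_star: assumes "w \<in> V" shows "card {e \<in> E. w \<in> e} = card (nbhd V E w)"
proof -
  have inj: "inj_on (\<lambda>u. {w,u}) (nbhd V E w)"
  proof (rule inj_onI)
    fix a b assume a: "a \<in> nbhd V E w" and b: "b \<in> nbhd V E w" and eq: "{w,a} = {w,b}"
    have "a \<in> {w,b}" using eq by (metis insertI1 insert_commute)
    then show "a = b" using nb_ne[OF a] by simp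
  qed
  then show ?thesis using star_eq[OF assms] card_image[OF inj] by simp
qed

lemma card_O: "int (card {e \<in> E. v \<notin> e \<and> th v \<notin> e}) = int (card E) - 6"
proof -
  let ?A = "{e \<in> E. v \<in> e}" and ?B = "{e \<in> E. th v \<in> e}"
  have cA: "card ?A = 3" using card_star[OF vV] deg by simp
  have cB: "card ?B = 3" using card_star[OF v'V] card_N' by simp
  have dis: "?A \<inter> ?B = {}"
  proof (rule ccontr)
    assume "?A \<inter> ?B \<noteq> {}"
    then obtain e where e: "e \<in> E" "v \<in> e" "th v \<in> e" by blast
    obtain a b where ab: "a \<noteq> b" "a \<in> V" "b \<in> V" "e = {a,b}" using edgeE[OF e(1)] by blast
    have "e = {v, th v}" using ab e v'ne by auto
    then have "th v \<in> N" using e v'V unfolding nbhd_def by auto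
    then show False using v'notN by simp
  qed
  have fA: "finite ?A" "finite ?B" using finE by auto
  have cU: "card (?A \<union> ?B) = 6" using card_Un_disjoint[OF fA dis] cA cB by simp
  have eq: "{e \<in> E. v \<notin> e \<and> th v \<notin> e} = E - (?A \<union> ?B)" by auto
  have "card (E - (?A \<union> ?B)) = card E - card (?A \<union> ?B)"
    by (rule card_Diff_subset) (use fA in auto)
  moreover have "card (?A \<union> ?B) \<le> card E" by (rule card_mono[OF finE]) auto
  ultimately show ?thesis using eq cU by simp
qed

lemma card_W: "int (card (red_V V th v)) = int (card V) - 2"
proof -
  have s: "{v, th v} \<subseteq> V" using vV v'V by auto
  have "card (V - {v, th v}) = card V - card {v, th v}"
    by (rule card_Diff_subset) (use s in auto)
  moreover have "card {v, th v} = 2" using v'ne by simp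
  moreover have "card {v, th v} \<le> card V" using card_mono[OF finV s] .
  ultimately show ?thesis unfolding red_V_def by simp
qed

lemma W_th: "u \<in> red_V V th v \<Longrightarrow> th u \<in> red_V V th v"
  unfolding red_V_def using thV thth vV by (metis DiffE DiffI insertCI insertE singletonD)

lemma th_doubleton:
  assumes "a \<in> V" "b \<in> V" "c \<in> V" "d \<in> V"
  shows "{th a, th b} = {th c, th d} \<longleftrightarrow> {a,b} = {c,d}"
  using th_inj assms by (auto simp: doubleton_eq_iff)

end



context L5
begin

context
  fixes x y
  assumes xN: "x \<in> N" and yN: "y \<in> N" and xy: "x \<noteq> y" and nxy: "{x,y} \<notin> E"
begin

abbreviation W where "W \<equiv> red_V V th v"
abbreviation EH where "EH \<equiv> red_E E th v x y"

lemma xV: "x \<in> V" and yV: "y \<in> V" using xN yN N_sub by auto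
lemma xW: "x \<in> W" and yW: "y \<in> W"
  using xN yN nb_ne v'notN xV yV unfolding red_V_def by auto
lemma txW: "th x \<in> W" and tyW: "th y \<in> W" using W_th xW yW by auto
lemma txN: "th x \<notin> N" and tyN: "th y \<notin> N" using thN_notN xN yN by auto
lemma txy: "th x \<noteq> th y" using th_inj xV yV xy by auto
lemma ntxy: "{th x, th y} \<notin> E" using thE xV yV nxy by auto
lemma x_ntxy: "x \<notin> {th x, th y}" "y \<notin> {th x, th y}"
  using nofixv xV yV thth txN tyN xN yN by (metis insertE singletonD)+

lemma WV: "W \<subseteq> V" unfolding red_V_def by auto

lemma H_simple: "simple_graph W EH"
proof -
  have "finite W" using finV WV finite_subset by blast
  moreover have "\<forall>e\<in>EH. \<exists>a b. a \<noteq> b \<and> a \<in> W \<and> b \<in> W \<and> e = {a, b}"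
  proof
    fix e assume e: "e \<in> EH"
    show "\<exists>a b. a \<noteq> b \<and> a \<in> W \<and> b \<in> W \<and> e = {a, b}"
    proof (cases "e \<in> E")
      case True
      then obtain a b where ab: "a \<noteq> b" "a \<in> V" "b \<in> V" "e = {a,b}" using edgeE by blast
      have "v \<notin> e" "th v \<notin> e" using e nxy ntxy True unfolding red_E_def by auto
      then show ?thesis using ab unfolding red_V_def by auto
    next
      case False
      then have "e = {x,y} \<or> e = {th x, th y}" using e unfolding red_E_def by auto
      then show ?thesis using xW yW txW tyW xy txy by blast
    qed
  qed
  ultimately show ?thesis unfolding simple_graph_def by blast
qed

lemma H_z2: "z2_symmetric W EH th"
proof -
  have "\<forall>u\<in>W. th u \<in> W \<and> th (th u) = u" using W_th thth WV by blast
  moreover have "\<forall>u\<in>W. \<forall>w\<in>W. {u, w} \<in> EH \<longleftrightarrow> {th u, th w} \<in> EH"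
  proof (intro ballI)
    fix u w assume u: "u \<in> W" and w: "w \<in> W"
    have uV: "u \<in> V" and wV: "w \<in> V" using u w WV by auto
    have tu: "th u \<in> W" "th w \<in> W" using u w W_th by auto
    have n1: "v \<noteq> u" "v \<noteq> w" "th v \<noteq> u" "th v \<noteq> w"
       "v \<noteq> th u" "v \<noteq> th w" "th v \<noteq> th u" "th v \<noteq> th w"
      using u w tu unfolding red_V_def by auto
    have e1: "{th u, th w} \<in> E \<longleftrightarrow> {u,w} \<in> E" using thE uV wV .
    have e2: "{th u, th w} = {th x, th y} \<longleftrightarrow> {u,w} = {x,y}"
      using th_doubleton[OF uV wV xV yV] .
    have e3: "{th u, th w} = {x, y} \<longleftrightarrow> {u,w} = {th x, th y}"
      using th_doubleton[OF uV wV thV[OF xV] thV[OF yV]] thth[OF xV] thth[OF yV] by simp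
    have m1: "{u, w} \<in> EH \<longleftrightarrow> {u,w} = {x,y} \<or> {u,w} = {th x, th y} \<or> {u,w} \<in> E"
      unfolding red_E_def using n1 by simp
    have m2: "{th u, th w} \<in> EH \<longleftrightarrow> {th u, th w} = {x,y} \<or> {th u, th w} = {th x, th y} \<or> {th u, th w} \<in> E"
      unfolding red_E_def using n1 by simp
    show "{u, w} \<in> EH \<longleftrightarrow> {th u, th w} \<in> EH"
      unfolding m1 m2 e1 e2 e3 by blast
  qed
  ultimately show ?thesis using H_simple unfolding z2_symmetric_def by blast
qed

lemma H_nofixv: "\<forall>u\<in>W. th u \<noteq> u" using nofixv WV by blast

lemma H_nofixe: "\<forall>e\<in>EH. th ` e \<noteq> e"
proof
  fix e assume e: "e \<in> EH"
  show "th ` e \<noteq> e"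
  proof (cases "e \<in> E")
    case True then show ?thesis using nofixe by blast
  next
    case False
    then have "e = {x,y} \<or> e = {th x, th y}" using e unfolding red_E_def by auto
    moreover have "th ` {x,y} \<noteq> {x,y}" using x_ntxy by auto
    moreover have "th ` {th x, th y} \<noteq> {th x, th y}" using x_ntxy thth xV yV by auto
    ultimately show ?thesis by blast
  qed
qed

lemma H_card: "int (card EH) = 2 * int (card W) - 2"
proof -
  let ?O = "{e \<in> E. v \<notin> e \<and> th v \<notin> e}"
  have eq: "EH = ?O \<union> {{x,y},{th x, th y}}" unfolding red_E_def by auto
  have dis: "?O \<inter> {{x,y},{th x, th y}} = {}" using nxy ntxy by auto
  have ne: "{x,y} \<noteq> {th x, th y}" using x_ntxy by auto
  have "card EH = card ?O + card {{x,y},{th x, th y}}"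
    unfolding eq by (rule card_Un_disjoint) (use finE dis in auto)
  then have "card EH = card ?O + 2" using ne by simp
  then show ?thesis using card_O card_W cardE by linarith
qed

lemma H_sparse_or:
  "sparse22 W EH \<or> (\<exists>T. T \<subseteq> W \<and> x \<in> T \<and> y \<in> T \<and> 2 * int (card T) - 2 \<le> ic T)"
proof (rule disjCI)
  assume nT0: "\<not> (\<exists>T. T \<subseteq> W \<and> x \<in> T \<and> y \<in> T \<and> 2 * int (card T) - 2 \<le> ic T)"
  have nT: "\<And>T. T \<subseteq> W \<Longrightarrow> x \<in> T \<Longrightarrow> y \<in> T \<Longrightarrow> 2 * int (card T) - 2 \<le> ic T \<Longrightarrow> False"
    using nT0 by blast
  show "sparse22 W EH" unfolding sparse22_def
  proof (intro allI impI, elim conjE)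
    fix X E' assume XW: "X \<subseteq> W" and Xne: "X \<noteq> {}" and E'H: "E' \<subseteq> EH" and E'X: "\<forall>e\<in>E'. e \<subseteq> X"
    define P1 where "P1 = (x \<in> X \<and> y \<in> X)"
    define P2 where "P2 = (th x \<in> X \<and> th y \<in> X)"
    define A where "A = (if P1 then {{x,y}} else {})"
    define B where "B = (if P2 then {{th x,th y}} else {})"
    have XV: "X \<subseteq> V" using XW WV by auto
    have fX: "finite X" using XV finV finite_subset by blast
    have sub: "E' \<subseteq> iE E X \<union> A \<union> B"
    proof
      fix e assume eE': "e \<in> E'"
      then have eX: "e \<subseteq> X" using E'X by blast
      have "e \<in> EH" using eE' E'H by blast
      then have "e \<in> E \<or> e = {x,y} \<or> e = {th x, th y}" unfolding red_E_def by blast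
      moreover
      { assume "e \<in> E" then have "e \<in> iE E X" using eX unfolding iE_def by blast }
      moreover
      { assume "e = {x,y}" then have "e \<in> A" using eX unfolding A_def P1_def by auto }
      moreover
      { assume "e = {th x, th y}" then have "e \<in> B" using eX unfolding B_def P2_def by auto }
      ultimately show "e \<in> iE E X \<union> A \<union> B" by blast
    qed
    have fin: "finite (iE E X \<union> A \<union> B)" using finiE A_def B_def by simp
    have "card E' \<le> card (iE E X \<union> A \<union> B)" using card_mono[OF fin sub] .
    also have "\<dots> \<le> card (iE E X \<union> A) + card B" by (rule card_Un_le)
    also have "\<dots> \<le> card (iE E X) + card A + card B" using card_Un_le by simp
    finally have c: "int (card E') \<le> ic X + (if P1 then 1 else 0) + (if P2 then 1 else 0)"
      unfolding A_def B_def by (simp split: if_splits)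
    have sp: "ic X \<le> 2 * int (card X) - 2" using sparse XV Xne by blast
    show "int (card E') \<le> 2 * int (card X) - 2"
    proof (rule ccontr)
      assume bad: "\<not> int (card E') \<le> 2 * int (card X) - 2"
      show False
      proof (cases P1)
        case True note P1 = True
        show False
        proof (cases P2)
          case False
          then have "2 * int (card X) - 2 \<le> ic X" using bad c P1 by simp
          then show False using XW P1 unfolding P1_def by (intro nT[of X]) auto
        next
          case True note P2 = True
          have icX: "2 * int (card X) - 3 \<le> ic X" using bad c P1 P2 by simp
          define Y where "Y = th ` X"
          have YW: "Y \<subseteq> W" using XW W_th Y_def by auto
          have YV: "Y \<subseteq> V" using YW WV by auto
          have icY: "ic Y = ic X" using ic_th[OF XV] Y_def by simp
          have cY: "card Y = card X" using card_th[OF XV] Y_def by simp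
          have xY: "x \<in> Y" "y \<in> Y" using P2 thth xV yV unfolding P2_def Y_def by (metis imageI)+
          have xX: "x \<in> X" "y \<in> X" using P1 P1_def by auto
          have fY: "finite Y" using fX Y_def by simp
          show False
          proof (cases "2 * int (card (X \<inter> Y)) - 2 \<le> ic (X \<inter> Y)")
            case True
            then show False using xX xY XW by (intro nT[of "X \<inter> Y"]) auto
          next
            case False
            then have icI: "ic (X \<inter> Y) \<le> 2 * int (card (X \<inter> Y)) - 3" by simp
            have cc: "card X + card Y = card (X \<union> Y) + card (X \<inter> Y)" using card_Un_Int[OF fX fY] .
            have sm: "ic X + ic Y \<le> ic (X \<union> Y) + ic (X \<inter> Y)" by (rule submod)
            have lo: "2 * int (card (X \<union> Y)) - 3 \<le> ic (X \<union> Y)"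
              using icX icY cY icI cc sm by linarith
            have hi: "ic (X \<union> Y) \<le> 2 * int (card (X \<union> Y)) - 2"
              using sparse XV YV Xne by auto
            have inv: "th ` (X \<union> Y) = X \<union> Y" using thth_img[OF XV] Y_def by auto
            have "even (card (iE E (X \<union> Y)))" using ic_even XV YV inv by auto
            then obtain k where k: "card (iE E (X \<union> Y)) = 2 * k" by blast
            have "2 * int (card (X \<union> Y)) - 2 \<le> ic (X \<union> Y)" using lo hi k by presburger
            then show False using xX XW YW by (intro nT[of "X \<union> Y"]) auto
          qed
        qed
      next
        case False note P1 = False
        show False
        proof (cases P2)
          case False
          then show False using bad c P1 sp by simp
        next
          case True note P2 = True
          have icX: "2 * int (card X) - 2 \<le> ic X" using bad c P1 P2 by simp
          define Y where "Y = th ` X"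
          have YW: "Y \<subseteq> W" using XW W_th Y_def by auto
          have icY: "ic Y = ic X" using ic_th[OF XV] Y_def by simp
          have cY: "card Y = card X" using card_th[OF XV] Y_def by simp
          have xY: "x \<in> Y" "y \<in> Y" using P2 thth xV yV unfolding P2_def Y_def by (metis imageI)+
          show False using YW xY icX icY cY by (intro nT[of Y]) auto
        qed
      qed
    qed
  qed
qed

lemma H_bad:
  assumes "\<not> Ci_tight22 W EH th"
  shows "\<exists>T. T \<subseteq> W \<and> x \<in> T \<and> y \<in> T \<and> 2 * int (card T) - 2 \<le> ic T"
  using assms H_sparse_or H_z2 H_nofixv H_nofixe H_card
  unfolding Ci_tight22_def tight22_def by blast

end
end



context L5
begin

lemma main:
  "induced_K4 E (N \<union> {v}) \<or>
   (\<exists>x\<in>N. \<exists>y\<in>N. x \<noteq> y \<and> {x, y} \<notin> E \<and> Ci_tight22 (red_V V th v) (red_E E th v x y) th)"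
proof (rule disjCI)
  assume nH: "\<not> (\<exists>x\<in>N. \<exists>y\<in>N. x \<noteq> y \<and> {x, y} \<notin> E \<and> Ci_tight22 (red_V V th v) (red_E E th v x y) th)"
  have key: "\<And>x y. x \<in> N \<Longrightarrow> y \<in> N \<Longrightarrow> x \<noteq> y \<Longrightarrow> {x,y} \<notin> E \<Longrightarrow>
     \<exists>T. T \<subseteq> red_V V th v \<and> x \<in> T \<and> y \<in> T \<and> 2 * int (card T) - 2 \<le> ic T"
    using H_bad nH by blast
  have vN: "v \<notin> N" using nb_ne by blast
  have fN: "finite N" using N_sub finV finite_subset by blast
  have c4: "card (N \<union> {v}) = 4" using vN fN deg by simp
  show "induced_K4 E (N \<union> {v})"
  proof (rule ccontr)
    assume "\<not> induced_K4 E (N \<union> {v})"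
    then obtain p q where pq: "p \<in> N \<union> {v}" "q \<in> N \<union> {v}" "p \<noteq> q" "{p,q} \<notin> E"
      using c4 unfolding induced_K4_def by blast
    have pN: "p \<in> N" using pq N_edge by (metis UnE insert_commute singletonD)
    have qN: "q \<in> N" using pq N_edge pN by (metis UnE insert_commute singletonD)
    have "card (N - {p,q}) = 1" using card_Diff_subset[of "{p,q}" N] pN qN pq(3) deg by auto
    then obtain r where r: "N - {p,q} = {r}" by (rule card_1_singletonE)
    have rN: "r \<in> N" and rp: "r \<noteq> p" and rq: "r \<noteq> q" using r by auto
    have Neq: "N = {p,q,r}" using r pN qN by auto
    obtain T1 where T1: "T1 \<subseteq> red_V V th v" "p \<in> T1" "q \<in> T1" "2 * int (card T1) - 2 \<le> ic T1"
      using key[OF pN qN pq(3,4)] by blast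
    have WV: "red_V V th v \<subseteq> V" unfolding red_V_def by auto
    have "\<exists>U. U \<subseteq> red_V V th v \<and> N \<subseteq> U \<and> 2 * int (card U) - 2 \<le> ic U"
    proof (cases "{p,r} \<in> E")
      case False
      obtain T2 where T2: "T2 \<subseteq> red_V V th v" "p \<in> T2" "r \<in> T2" "2 * int (card T2) - 2 \<le> ic T2"
        using key[OF pN rN rp[symmetric] False] by blast
      have "2 * int (card (T1 \<union> T2)) - 2 \<le> ic (T1 \<union> T2)"
        by (rule tight_union) (use T1 T2 WV in auto)
      then show ?thesis using T1 T2 Neq by (intro exI[of _ "T1 \<union> T2"]) auto
    next
      case pr: True
      show ?thesis
      proof (cases "{q,r} \<in> E")
        case False
        obtain T2 where T2: "T2 \<subseteq> red_V V th v" "q \<in> T2" "r \<in> T2" "2 * int (card T2) - 2 \<le> ic T2"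
          using key[OF qN rN rq[symmetric] False] by blast
        have "2 * int (card (T1 \<union> T2)) - 2 \<le> ic (T1 \<union> T2)"
          by (rule tight_union) (use T1 T2 WV in auto)
        then show ?thesis using T1 T2 Neq by (intro exI[of _ "T1 \<union> T2"]) auto
      next
        case qr: True
        show ?thesis
        proof (cases "r \<in> T1")
          case True then show ?thesis using T1 Neq by auto
        next
          case False
          have "ic T1 + int (card {p,q}) \<le> ic (insert r T1)"
            by (rule addv) (use False T1 pr qr in \<open>auto simp: insert_commute\<close>)
          moreover have "card (insert r T1) = card T1 + 1"
            using False T1 WV finV finite_subset by (metis card_insert_disjoint Suc_eq_plus1 subset_trans)
          moreover have "r \<in> red_V V th v" using rN N_sub nb_ne[OF rN] v'notN unfolding red_V_def by auto
          ultimately show ?thesis using T1 Neq pq(3) by (intro exI[of _ "insert r T1"]) auto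
        qed
      qed
    qed
    then obtain U where U: "U \<subseteq> red_V V th v" "N \<subseteq> U" "2 * int (card U) - 2 \<le> ic U" by blast
    have vU: "v \<notin> U" using U unfolding red_V_def by auto
    have UV: "U \<subseteq> V" using U WV by auto
    have "ic U + int (card N) \<le> ic (insert v U)"
      by (rule addv) (use vU U fN N_edge in auto)
    moreover have "card (insert v U) = card U + 1"
      using vU UV finV finite_subset by (metis card_insert_disjoint Suc_eq_plus1)
    moreover have "ic (insert v U) \<le> 2 * int (card (insert v U)) - 2"
      using sparse[of "insert v U"] UV vV by auto
    ultimately show False using U deg by linarith
  qed
qed

end

theorem lemma5p4:
  fixes V :: "'a set" and E :: "'a set set" and \<theta> :: "'a \<Rightarrow> 'a" and v :: 'a
  assumes "Ci_tight22 V E \<theta>"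
    and "v \<in> V"
    and "card (nbhd V E v) = 3"
    and "nbhd V E v \<inter> nbhd V E (\<theta> v) = {}"
  shows "induced_K4 E (nbhd V E v \<union> {v}) \<or>
         (\<exists>x\<in>nbhd V E v. \<exists>y\<in>nbhd V E v. x \<noteq> y \<and> {x, y} \<notin> E \<and>
            Ci_tight22 (red_V V \<theta> v) (red_E E \<theta> v x y) \<theta>)"
proof -
  interpret L5 V E \<theta> v using assms by unfold_locales
  show ?thesis by (rule main)
qed


end
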